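(* The short exact sequence $1\to\mathrm{Sym}(\{0,1\}^* )\to QF\xrightarrow{\pi} F\to 1$ splits.
   Context: Let $\{0,1\}^*$ be the finite words over $\{0,1\}$, the vertices of the rooted binary tree in which $x$ has children $x0$ and $x1$ (two edge colours). $QV$ is the group of bijections $\tau$ of $\{0,1\}^*$ with $\tau(x0)=\tau(x)0$ and $\tau(x1)=\tau(x)1$ for all but finitely many $x$. Each such $\tau$ induces a homeomorphism $\pi(\tau)$ of $\{0,1\}^{\mathbb N}$ by $\pi(\tau)(\ell\omega)=\tau(\ell)\omega$, for $\ell$ in a finite maximal prefix-antichain $L$ with $\tau(\ell s)=\tau(\ell)s$ for all $\ell\in L$ and words $s$; this gives a surjective homomorphism $\pi$ onto Thompson's group $V$ whose kernel is $\mathrm{Sym}(\{0,1\}^* )$, the finitely supported permutations. Thompson's group $F\le V$ consists of the lexicographic-order-preserving elements, $QF=\pi^{-1}(F)$, and $\pi$ also denotes the restriction $QF\to F$. *)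

theory Defs
  imports "HOL-Algebra.Group" "HOL-Library.Sublist"
begin

text \<open>Vertices of the rooted binary tree: finite words over {0,1}, encoded as bool lists
  (False = 0, True = 1). The children of x are x@[False] and x@[True].\<close>

type_synonym word = "bool list"
type_synonym cantor = "nat \<Rightarrow> bool"

definition QV :: "(word \<Rightarrow> word) set" where
  "QV = {\<tau>. bij \<tau> \<and>
      finite {x. \<not> (\<tau> (x @ [False]) = \<tau> x @ [False] \<and> \<tau> (x @ [True]) = \<tau> x @ [True])}}"

definition cat :: "word \<Rightarrow> cantor \<Rightarrow> cantor" where
  "cat l \<omega> = (\<lambda>k. if k < length l then l ! k else \<omega> (k - length l))"

definition max_prefix_antichain :: "word set \<Rightarrow> bool" where
  "max_prefix_antichain L \<longleftrightarrow> finite L \<and>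
     (\<forall>a\<in>L. \<forall>b\<in>L. prefix a b \<longrightarrow> a = b) \<and>
     (\<forall>w. \<exists>l\<in>L. prefix l w \<or> prefix w l)"

definition qpi :: "(word \<Rightarrow> word) \<Rightarrow> cantor \<Rightarrow> cantor" where
  "qpi \<tau> \<omega> = (SOME y. \<exists>L. max_prefix_antichain L \<and> (\<forall>l\<in>L. \<forall>s. \<tau> (l @ s) = \<tau> l @ s) \<and>
       (\<exists>l\<in>L. \<exists>\<omega>'. \<omega> = cat l \<omega>' \<and> y = cat (\<tau> l) \<omega>'))"

definition ThompsonV :: "(cantor \<Rightarrow> cantor) set" where
  "ThompsonV = qpi ` QV"

definition lex_less :: "cantor \<Rightarrow> cantor \<Rightarrow> bool" where
  "lex_less a b \<longleftrightarrow> (\<exists>n. (\<forall>k<n. a k = b k) \<and> \<not> a n \<and> b n)"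

definition ThompsonF :: "(cantor \<Rightarrow> cantor) set" where
  "ThompsonF = {f \<in> ThompsonV. \<forall>a b. lex_less a b \<longrightarrow> lex_less (f a) (f b)}"

definition QF :: "(word \<Rightarrow> word) set" where
  "QF = {\<tau> \<in> QV. qpi \<tau> \<in> ThompsonF}"

definition QF_group :: "(word \<Rightarrow> word) monoid" where
  "QF_group = \<lparr>carrier = QF, mult = (\<circ>), one = id\<rparr>"

definition F_group :: "(cantor \<Rightarrow> cantor) monoid" where
  "F_group = \<lparr>carrier = ThompsonF, mult = (\<circ>), one = id\<rparr>"

end

theory Submission
  imports Defs
begin

lemma cat_append: "cat (a @ b) \<omega> = cat a (cat b \<omega>)"
  unfolding cat_def by (auto simp: nth_append fun_eq_iff)

lemma cat_inj2: assumes "cat l \<omega> = cat l \<omega>'" shows "\<omega> = \<omega>'"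
proof
  fix k
  have "cat l \<omega> (k + length l) = cat l \<omega>' (k + length l)" using assms by simp
  then show "\<omega> k = \<omega>' k" by (simp add: cat_def)
qed

lemma cat_prefix:
  assumes "cat l \<omega> = cat l2 \<omega>2" "length l \<le> length l2"
  shows "\<exists>s. l2 = l @ s"
proof -
  have "take (length l) l2 = l"
  proof (rule nth_equalityI)
    show "length (take (length l) l2) = length l" using assms(2) by simp
    fix i assume "i < length (take (length l) l2)"
    then have i: "i < length l" by simp
    have "cat l \<omega> i = cat l2 \<omega>2 i" using assms(1) by simp
    then show "take (length l) l2 ! i = l ! i" using i assms(2) by (simp add: cat_def)
  qed
  then show ?thesis by (metis append_take_drop_id)
qed

definition goodL :: "(word \<Rightarrow> word) \<Rightarrow> word set \<Rightarrow> bool" where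
  "goodL \<tau> L \<longleftrightarrow> max_prefix_antichain L \<and> (\<forall>l\<in>L. \<forall>s. \<tau> (l @ s) = \<tau> l @ s)"

lemma qpi_eval:
  assumes "goodL \<tau> L" "l \<in> L"
  shows "qpi \<tau> (cat l \<omega>') = cat (\<tau> l) \<omega>'"
proof -
  let ?P = "\<lambda>y. \<exists>L. max_prefix_antichain L \<and> (\<forall>l\<in>L. \<forall>s. \<tau> (l @ s) = \<tau> l @ s) \<and>
       (\<exists>l'\<in>L. \<exists>\<omega>''. cat l \<omega>' = cat l' \<omega>'' \<and> y = cat (\<tau> l') \<omega>'')"
  have "?P (cat (\<tau> l) \<omega>')"
  proof (rule exI[of _ L], intro conjI)
    show "max_prefix_antichain L" "\<forall>l\<in>L. \<forall>s. \<tau> (l @ s) = \<tau> l @ s"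
      using assms(1) unfolding goodL_def by simp_all
    show "\<exists>l'\<in>L. \<exists>\<omega>''. cat l \<omega>' = cat l' \<omega>'' \<and> cat (\<tau> l) \<omega>' = cat (\<tau> l') \<omega>''"
      using assms(2) by blast
  qed
  then have "?P (qpi \<tau> (cat l \<omega>'))" unfolding qpi_def by (rule someI[where P="?P"])
  then obtain L2 l2 \<omega>2 where L2: "\<forall>l\<in>L2. \<forall>s. \<tau> (l @ s) = \<tau> l @ s" "l2 \<in> L2"
    and eq: "cat l \<omega>' = cat l2 \<omega>2" and q: "qpi \<tau> (cat l \<omega>') = cat (\<tau> l2) \<omega>2"
    by (elim exE conjE bexE) (rule that, assumption+)
  show ?thesis
  proof (cases "length l \<le> length l2")
    case True
    then obtain s where s: "l2 = l @ s" using cat_prefix[OF eq] by blast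
    have "cat l \<omega>' = cat l (cat s \<omega>2)" using eq unfolding s cat_append .
    then have w: "\<omega>' = cat s \<omega>2" by (rule cat_inj2)
    have t: "\<tau> l2 = \<tau> l @ s" using assms unfolding goodL_def s by simp
    show ?thesis using q unfolding t w cat_append .
  next
    case False
    then obtain s where s: "l = l2 @ s" using cat_prefix[OF eq[symmetric]] by fastforce
    have "cat l2 (cat s \<omega>') = cat l2 \<omega>2" using eq unfolding s cat_append .
    then have w: "\<omega>2 = cat s \<omega>'" by (rule cat_inj2[symmetric])
    have t: "\<tau> l = \<tau> l2 @ s" using L2 unfolding s by simp
    show ?thesis using q unfolding t w cat_append .
  qed
qed

lemma cover:
  assumes "max_prefix_antichain L"
  shows "\<exists>l\<in>L. \<exists>\<omega>'. \<omega> = cat l \<omega>'"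
proof -
  define N where "N = Suc (Max (length ` L))"
  define w where "w = map \<omega> [0..<N]"
  have fin: "finite L" using assms unfolding max_prefix_antichain_def by blast
  have om: "\<omega> = cat w (\<lambda>k. \<omega> (k + N))"
  proof
    fix k show "\<omega> k = cat w (\<lambda>k. \<omega> (k + N)) k"
      by (cases "k < N") (simp_all add: cat_def w_def)
  qed
  obtain l where l: "l \<in> L" "prefix l w \<or> prefix w l" using assms unfolding max_prefix_antichain_def by blast
  have "length l < N" using fin l(1) unfolding N_def by (simp add: le_imp_less_Suc)
  moreover have "length w = N" by (simp add: w_def)
  ultimately have "prefix l w" using l(2) prefix_length_le by fastforce
  then obtain s where "w = l @ s" by (auto elim: prefixE)
  then show ?thesis using om l(1) by (metis cat_append)
qed

lemma exists_good:
  assumes "\<tau> \<in> QV" shows "\<exists>L. goodL \<tau> L"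
proof -
  define E where "E = {x. \<not> (\<tau> (x @ [False]) = \<tau> x @ [False] \<and> \<tau> (x @ [True]) = \<tau> x @ [True])}"
  have finE: "finite E" using assms unfolding QV_def E_def by blast
  define N where "N = Suc (Max (insert 0 (length ` E)))"
  have notE: "x \<notin> E" if "length x \<ge> N" for x
  proof
    assume "x \<in> E"
    then have "length x \<le> Max (insert 0 (length ` E))" using finE by simp
    then show False using that unfolding N_def by simp
  qed
  define L where "L = {w::word. length w = N}"
  have comm: "\<tau> (l @ s) = \<tau> l @ s" if "length l = N" for l s
  proof (induction s rule: rev_induct)
    case Nil then show ?case by simp
  next
    case (snoc b s)
    have "l @ s \<notin> E" using that by (intro notE) simp
    then have "\<tau> ((l @ s) @ [b]) = \<tau> (l @ s) @ [b]" unfolding E_def by (cases b) auto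
    then show ?case using snoc by simp
  qed
  have "finite L"
  proof -
    have "L = {xs. set xs \<subseteq> UNIV \<and> length xs = N}" unfolding L_def by simp
    then show ?thesis using finite_lists_length_eq[of "UNIV :: bool set" N] by simp
  qed
  moreover have "\<forall>a\<in>L. \<forall>b\<in>L. prefix a b \<longrightarrow> a = b"
    unfolding L_def by (auto elim: prefixE)
  moreover have "\<exists>l\<in>L. prefix l w \<or> prefix w l" for w
  proof (cases "length w \<ge> N")
    case True
    then show ?thesis by (intro bexI[of _ "take N w"]) (auto simp: L_def take_is_prefix)
  next
    case False
    then show ?thesis by (intro bexI[of _ "w @ replicate (N - length w) False"]) (auto simp: L_def)
  qed
  ultimately have "max_prefix_antichain L" unfolding max_prefix_antichain_def by blast
  moreover have "\<forall>l\<in>L. \<forall>s. \<tau> (l @ s) = \<tau> l @ s" using comm unfolding L_def by blast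
  ultimately show ?thesis unfolding goodL_def by blast
qed


lemma lex_ne: "lex_less a b \<Longrightarrow> a \<noteq> b"
  unfolding lex_less_def by blast

lemma lex_total:
  assumes "a \<noteq> b" shows "lex_less a b \<or> lex_less b a"
proof -
  obtain k where "a k \<noteq> b k" using assms by blast
  define n where "n = (LEAST k. a k \<noteq> b k)"
  have n: "a n \<noteq> b n" unfolding n_def by (rule LeastI) fact
  have lt: "\<forall>k<n. a k = b k" unfolding n_def using not_less_Least by blast
  show ?thesis
  proof (cases "a n")
    case True
    then have "lex_less b a" unfolding lex_less_def using n lt by (intro exI[of _ n]) auto
    then show ?thesis ..
  next
    case False
    then have "lex_less a b" unfolding lex_less_def using n lt by (intro exI[of _ n]) auto
    then show ?thesis ..
  qed
qed

lemma not_lex_zero: "\<not> lex_less a (\<lambda>_. False)"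
  unfolding lex_less_def by blast

lemma zero_lex:
  assumes "\<omega> \<noteq> (\<lambda>_. False)" shows "lex_less (\<lambda>_. False) \<omega>"
proof -
  have "\<omega> \<noteq> (\<lambda>_. False)" by fact
  then have "lex_less (\<lambda>_. False) \<omega> \<or> lex_less \<omega> (\<lambda>_. False)" by (intro lex_total) auto
  then show ?thesis using not_lex_zero by blast
qed

lemma F_inj: assumes "f \<in> ThompsonF" shows "inj f"
proof (rule injI, rule ccontr)
  fix a b assume e: "f a = f b" and ne: "a \<noteq> b"
  have mono: "\<forall>a b. lex_less a b \<longrightarrow> lex_less (f a) (f b)" using assms unfolding ThompsonF_def by blast
  from lex_total[OF ne] show False
    using mono e lex_ne by metis
qed

lemma F_rep:
  assumes "f \<in> ThompsonF"
  obtains \<tau> L where "\<tau> \<in> QV" "f = qpi \<tau>" "goodL \<tau> L"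
proof -
  obtain \<tau> where t: "\<tau> \<in> QV" "f = qpi \<tau>" using assms unfolding ThompsonF_def ThompsonV_def by blast
  obtain L where "goodL \<tau> L" using exists_good[OF t(1)] by blast
  then show ?thesis using t that by blast
qed

definition enc :: "word \<Rightarrow> cantor" where
  "enc x = cat (x @ [True]) (\<lambda>_. False)"

definition dec :: "cantor \<Rightarrow> word" where
  "dec \<omega> = map \<omega> [0..<Max {k. \<omega> k}]"

definition DD :: "cantor set" where
  "DD = {\<omega>. \<omega> \<noteq> (\<lambda>_. False) \<and> finite {k. \<omega> k}}"

lemma enc_apply: "enc x k = (if k < length x then x ! k else k = length x)"
  unfolding enc_def cat_def by (auto simp: nth_append)

lemma enc_support: "{k. enc x k} \<subseteq> {..length x}"
  by (auto simp: enc_apply split: if_splits)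

lemma enc_Max: "Max {k. enc x k} = length x"
proof (rule Max_eqI)
  show "finite {k. enc x k}" using enc_support finite_subset by blast
  show "length x \<in> {k. enc x k}" by (simp add: enc_apply)
  fix y assume "y \<in> {k. enc x k}" then show "y \<le> length x" using enc_support by auto
qed

lemma dec_enc[simp]: "dec (enc x) = x"
  unfolding dec_def enc_Max by (rule nth_equalityI) (auto simp: enc_apply)

lemma enc_DD: "enc x \<in> DD"
proof -
  have "enc x (length x)" by (simp add: enc_apply)
  then have "enc x \<noteq> (\<lambda>_. False)" by auto
  then show ?thesis unfolding DD_def using enc_support finite_subset by blast
qed

lemma enc_dec:
  assumes "\<omega> \<in> DD" shows "enc (dec \<omega>) = \<omega>"
proof
  fix k
  define n where "n = Max {k. \<omega> k}"
  have fin: "finite {k. \<omega> k}" and ne: "{k. \<omega> k} \<noteq> {}" using assms unfolding DD_def by auto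
  have wn: "\<omega> n" using Max_in[OF fin ne] unfolding n_def by simp
  have gt: "\<not> \<omega> k" if "k > n" for k using Max_ge[OF fin, of k] that unfolding n_def by auto
  have "dec \<omega> = map \<omega> [0..<n]" unfolding dec_def n_def ..
  then show "enc (dec \<omega>) k = \<omega> k"
    using wn gt by (auto simp: enc_apply) (meson linorder_neqE_nat)
qed

lemma cat_fin:
  assumes "finite {k. \<omega> k}" shows "finite {k. cat m \<omega> k}"
proof -
  have "{k. cat m \<omega> k} \<subseteq> {..<length m} \<union> (\<lambda>k. k + length m) ` {k. \<omega> k}"
  proof
    fix k assume "k \<in> {k. cat m \<omega> k}"
    then show "k \<in> {..<length m} \<union> (\<lambda>k. k + length m) ` {k. \<omega> k}"
      by (cases "k < length m") (auto simp: cat_def image_iff intro!: exI[of _ "k - length m"])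
  qed
  then show ?thesis using assms finite_subset by blast
qed

lemma cat_fin_tail:
  assumes "finite {k. cat m \<omega> k}" shows "finite {k. \<omega> k}"
proof -
  have "{k. \<omega> k} \<subseteq> (\<lambda>k. k - length m) ` {k. cat m \<omega> k}"
  proof
    fix k assume "k \<in> {k. \<omega> k}"
    then have "cat m \<omega> (k + length m)" by (simp add: cat_def)
    then show "k \<in> (\<lambda>k. k - length m) ` {k. cat m \<omega> k}" by (intro image_eqI[of _ _ "k + length m"]) auto
  qed
  then show ?thesis using assms finite_subset by blast
qed

lemma F_DD:
  assumes f: "f \<in> ThompsonF" and w: "\<omega> \<in> DD" shows "f \<omega> \<in> DD"
proof -
  obtain \<tau> L where t: "\<tau> \<in> QV" "f = qpi \<tau>" "goodL \<tau> L" using F_rep[OF f] by blast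
  obtain l \<omega>' where l: "l \<in> L" "\<omega> = cat l \<omega>'"
    using cover[of L \<omega>] t(3) unfolding goodL_def by blast
  have fo: "f \<omega> = cat (\<tau> l) \<omega>'" using qpi_eval[OF t(3) l(1)] t(2) l(2) by simp
  have "finite {k. \<omega> k}" using w unfolding DD_def by blast
  then have "finite {k. \<omega>' k}" using l(2) cat_fin_tail by blast
  then have fin: "finite {k. f \<omega> k}" unfolding fo by (rule cat_fin)
  have mono: "\<forall>a b. lex_less a b \<longrightarrow> lex_less (f a) (f b)" using f unfolding ThompsonF_def by blast
  have "lex_less (\<lambda>_. False) \<omega>" using w zero_lex unfolding DD_def by blast
  then have "lex_less (f (\<lambda>_. False)) (f \<omega>)" using mono by blast
  then have "f \<omega> \<noteq> (\<lambda>_. False)" using not_lex_zero by metis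
  then show ?thesis using fin unfolding DD_def by blast
qed


definition sec :: "(cantor \<Rightarrow> cantor) \<Rightarrow> word \<Rightarrow> word" where
  "sec f = (\<lambda>x. dec (f (enc x)))"

lemma sec_main:
  assumes f: "f \<in> ThompsonF"
  shows "sec f \<in> QF \<and> qpi (sec f) = f"
proof -
  obtain \<tau> L where t: "\<tau> \<in> QV" "f = qpi \<tau>" "goodL \<tau> L" using F_rep[OF f] by blast
  have mpa: "max_prefix_antichain L" and Lp: "\<And>l s. l \<in> L \<Longrightarrow> \<tau> (l @ s) = \<tau> l @ s"
    using t(3) unfolding goodL_def by auto
  have finL: "finite L" and anti: "\<And>a b. a \<in> L \<Longrightarrow> b \<in> L \<Longrightarrow> prefix a b \<Longrightarrow> a = b"
    and maxi: "\<And>w. \<exists>l\<in>L. prefix l w \<or> prefix w l"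
    using mpa unfolding max_prefix_antichain_def by auto
  define g where "g = sec f"
  have onB: "g (l @ s) = \<tau> (l @ s)" if "l \<in> L" for l s
  proof -
    have e: "enc (l @ s) = cat l (cat (s @ [True]) (\<lambda>_. False))"
      unfolding enc_def by (simp add: cat_append[symmetric])
    have "f (enc (l @ s)) = cat (\<tau> l) (cat (s @ [True]) (\<lambda>_. False))"
      unfolding e t(2) by (rule qpi_eval[OF t(3) that])
    also have "\<dots> = enc (\<tau> (l @ s))" unfolding Lp[OF that] enc_def by (simp add: cat_append[symmetric])
    finally show ?thesis unfolding g_def sec_def by simp
  qed
  have injg: "inj g"
  proof (rule injI)
    fix x y assume "g x = g y"
    then have "enc (dec (f (enc x))) = enc (dec (f (enc y)))" unfolding g_def sec_def by simp
    then have "f (enc x) = f (enc y)" using enc_dec F_DD[OF f enc_DD] by metis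
    then have "enc x = enc y" using F_inj[OF f] by (simp add: inj_eq)
    then show "x = y" by (metis dec_enc)
  qed
  define B where "B = {x. \<exists>l\<in>L. prefix l x}"
  define A where "A = {x. \<exists>l\<in>L. strict_prefix x l}"
  have AorB: "x \<in> A \<or> x \<in> B" for x
  proof -
    obtain l where l: "l \<in> L" "prefix l x \<or> prefix x l" using maxi by blast
    show ?thesis
    proof (cases "prefix l x")
      case True then have "x \<in> B" unfolding B_def using l(1) by blast
      then show ?thesis ..
    next
      case False
      then have "prefix x l" "x \<noteq> l" using l(2) by auto
      then have "strict_prefix x l" unfolding strict_prefix_def by blast
      then have "x \<in> A" unfolding A_def using l(1) by blast
      then show ?thesis ..
    qed
  qed
  have AnB: "x \<notin> B" if xA: "x \<in> A" for x
  proof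
    assume "x \<in> B"
    then obtain l' where l': "l' \<in> L" "prefix l' x" unfolding B_def by blast
    obtain l where l: "l \<in> L" "strict_prefix x l" using xA unfolding A_def by blast
    have xl: "prefix x l" "x \<noteq> l" using l(2) unfolding strict_prefix_def by auto
    have "prefix l' l" using l'(2) xl(1) by (rule prefix_order.order_trans)
    then have "l' = l" using anti l'(1) l(1) by blast
    then have "prefix l x" using l'(2) by simp
    then have "x = l" using xl(1) by (rule prefix_order.antisym[rotated])
    then show False using xl(2) by blast
  qed
  have finA: "finite A"
  proof (rule finite_subset)
    show "A \<subseteq> (\<Union>l\<in>L. set (prefixes l))"
    proof
      fix x assume "x \<in> A"
      then obtain l where "l \<in> L" "strict_prefix x l" unfolding A_def by blast
      then show "x \<in> (\<Union>l\<in>L. set (prefixes l))" unfolding strict_prefix_def by auto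
    qed
    show "finite (\<Union>l\<in>L. set (prefixes l))" using finL by blast
  qed
  have gB: "g x = \<tau> x" if xB: "x \<in> B" for x
  proof -
    obtain l where l: "l \<in> L" "prefix l x" using xB unfolding B_def by blast
    then obtain s where "x = l @ s" by (auto elim: prefixE)
    then show ?thesis using onB[OF l(1)] by simp
  qed
  have bt: "bij \<tau>" using t(1) unfolding QV_def by blast
  have injt: "inj \<tau>" using bt bij_is_inj by blast
  have gA: "g ` A \<subseteq> \<tau> ` A"
  proof
    fix y assume "y \<in> g ` A"
    then obtain a where a: "a \<in> A" "y = g a" by blast
    obtain z where z: "y = \<tau> z" using bt by (metis bij_pointE)
    have "z \<notin> B"
    proof
      assume "z \<in> B"
      then have "g z = y" using gB z by simp
      then have "z = a" using injg a(2) by (simp add: inj_eq)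
      then show False using AnB a(1) \<open>z \<in> B\<close> by blast
    qed
    then have "z \<in> A" using AorB by blast
    then show "y \<in> \<tau> ` A" using z by blast
  qed
  have "card (g ` A) = card (\<tau> ` A)"
    using card_image[OF inj_on_subset[OF injg]] card_image[OF inj_on_subset[OF injt]] by simp
  then have gAe: "g ` A = \<tau> ` A" using gA finA by (intro card_subset_eq) auto
  have surjg: "surj g"
  proof -
    have "y \<in> range g" for y
    proof -
      obtain z where z: "y = \<tau> z" using bt by (metis bij_pointE)
      show ?thesis
      proof (cases "z \<in> B")
        case True then show ?thesis using gB z by (metis rangeI)
      next
        case False then have "z \<in> A" using AorB by blast
        then have "y \<in> g ` A" using gAe z by blast
        then show ?thesis by blast
      qed
    qed
    then show ?thesis by blast
  qed
  have exc: "{x. \<not> (g (x @ [False]) = g x @ [False] \<and> g (x @ [True]) = g x @ [True])} \<subseteq> A"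
  proof
    fix x assume x: "x \<in> {x. \<not> (g (x @ [False]) = g x @ [False] \<and> g (x @ [True]) = g x @ [True])}"
    show "x \<in> A"
    proof (rule ccontr)
      assume "x \<notin> A"
      then have "x \<in> B" using AorB by blast
      then obtain l s where ls: "l \<in> L" "x = l @ s" unfolding B_def by (auto elim!: prefixE)
      have "g (x @ [b]) = g x @ [b]" for b
        using onB[OF ls(1), of "s @ [b]"] onB[OF ls(1), of s] Lp[OF ls(1)] ls(2) by simp
      then show False using x by blast
    qed
  qed
  have gQV: "g \<in> QV" unfolding QV_def
    using injg surjg exc finA finite_subset by (auto simp: bij_def)
  have gg: "goodL g L"
    unfolding goodL_def using mpa onB Lp by (metis append.right_neutral)
  have qg: "qpi g = f"
  proof
    fix \<omega>
    obtain l \<omega>' where l: "l \<in> L" "\<omega> = cat l \<omega>'" using cover[OF mpa] by blast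
    have "qpi g \<omega> = cat (g l) \<omega>'" using qpi_eval[OF gg l(1)] l(2) by simp
    also have "\<dots> = cat (\<tau> l) \<omega>'" using onB[OF l(1), of "[]"] by simp
    also have "\<dots> = f \<omega>" using qpi_eval[OF t(3) l(1)] l(2) t(2) by simp
    finally show "qpi g \<omega> = f \<omega>" .
  qed
  have "g \<in> QF" unfolding QF_def using gQV qg f by (simp only: mem_Collect_eq)
  then show ?thesis using qg unfolding g_def by blast
qed

lemma sec_mult:
  assumes "f \<in> ThompsonF" "h \<in> ThompsonF"
  shows "sec (f \<circ> h) = sec f \<circ> sec h"
proof
  fix x
  have "enc (dec (h (enc x))) = h (enc x)" using enc_dec F_DD[OF assms(2) enc_DD] by blast
  then show "sec (f \<circ> h) x = (sec f \<circ> sec h) x" unfolding sec_def by simp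
qed

theorem lemma2p5:
  shows "\<exists>s \<in> hom F_group QF_group. \<forall>f \<in> ThompsonF. qpi (s f) = f"
proof (rule bexI[of _ sec])
  show "\<forall>f \<in> ThompsonF. qpi (sec f) = f" using sec_main by blast
  show "sec \<in> hom F_group QF_group"
    unfolding hom_def F_group_def QF_group_def using sec_main sec_mult by auto
qed

end
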